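(* Let $G$ be a locally compact Hausdorff group, $H,K$ closed subgroups of $G$, and $N$ the normalizer of $K$ in $G$. If $\mu$ is an $N$-strongly quasi-invariant measure on $K\backslash G/H$ which arises from a rho-function, then $\operatorname{supp}\mu=K\backslash G/H$.
   Context: $dx,dh,dk$ are left Haar measures on $G,H,K$ with modular functions $\Delta_G,\Delta_H,\Delta_K$. $N=\{g\in G: gK=Kg\}$. $K\backslash G/H=\{KxH\}$ carries the quotient topology from $q(x)=KxH=:\ddot x$; $N$ acts on it by $n\cdot KxH=KnxH$. A rho-function for $(K,G,H)$ is a non-negative locally integrable $\rho$ on $G$ with $\rho(kxh)=\frac{\Delta_K(k)\Delta_H(h)}{\Delta_G(h)}\rho(x)$. For a positive Radon measure $\mu$ on $K\backslash G/H$ and $n\in N$, $\mu_n(E)=\mu(n\cdot E)$; $\mu$ is $N$-strongly quasi-invariant if there is a continuous positive $\lambda$ on $N\times K\backslash G/H$ with $d\mu_n=\lambda(n,\cdot)\,d\mu$ for all $n\in N$. $\mu$ arises from a rho-function if there is a rho-function $\rho:G\to(0,+\infty)$ with $\int_{K\backslash G/H}\int_K\int_H f(k^{-1}xh)\,dh\,dk\,d\mu(\ddot x)=\int_G f(x)\rho(x)\,dx$ for all $f\in C_c(G)$. *)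

theory Defs
  imports "HOL-Analysis.Analysis"
begin

text \<open>The ambient group G is the whole type 'a (written additively, but NOT assumed
  commutative: class group_add). Subgroups are subsets of 'a.\<close>

definition closed_subgroup :: "'a::{group_add,topological_space} set \<Rightarrow> bool" where
  "closed_subgroup S \<longleftrightarrow> closed S \<and> 0 \<in> S \<and> (\<forall>a\<in>S. \<forall>b\<in>S. a + b \<in> S) \<and> (\<forall>a\<in>S. - a \<in> S)"

text \<open>Positive Radon measure on the closed set S, viewed as a Borel measure on 'a
  concentrated on S (finite on compacts, outer regular on Borel sets, inner regular on opens).\<close>
definition radon_on :: "'a::topological_space set \<Rightarrow> 'a measure \<Rightarrow> bool" where
  "radon_on S M \<longleftrightarrow> sets M = sets borel \<and> emeasure M (- S) = 0 \<and>
     (\<forall>C. compact C \<and> C \<subseteq> S \<longrightarrow> emeasure M C < \<infinity>) \<and>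
     (\<forall>A\<in>sets borel. emeasure M A = (INF U\<in>{U. open U \<and> A \<subseteq> U}. emeasure M U)) \<and>
     (\<forall>U. open U \<longrightarrow> emeasure M U = (SUP C\<in>{C. compact C \<and> C \<subseteq> U \<inter> S}. emeasure M C))"

definition haar_on :: "'a::{group_add,topological_space} set \<Rightarrow> 'a measure \<Rightarrow> bool" where
  "haar_on S M \<longleftrightarrow> radon_on S M \<and> emeasure M S > 0 \<and>
     (\<forall>s\<in>S. \<forall>A\<in>sets borel. emeasure M ((\<lambda>y. s + y) ` A) = emeasure M A)"

definition modular_fn :: "'a::{group_add,topological_space} set \<Rightarrow> 'a measure \<Rightarrow> ('a \<Rightarrow> real) \<Rightarrow> bool" where
  "modular_fn S M \<Delta> \<longleftrightarrow> (\<forall>s\<in>S. \<Delta> s > 0 \<and>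
     (\<forall>A\<in>sets borel. emeasure M ((\<lambda>y. y + s) ` A) = ennreal (\<Delta> s) * emeasure M A))"

definition normalizer :: "'a::group_add set \<Rightarrow> 'a set" where
  "normalizer K = {g. (\<lambda>k. g + k) ` K = (\<lambda>k. k + g) ` K}"

definition dcoset :: "'a::group_add set \<Rightarrow> 'a set \<Rightarrow> 'a \<Rightarrow> 'a set" where
  "dcoset K H x = {k + x + h | k h. k \<in> K \<and> h \<in> H}"

definition dcosets :: "'a::group_add set \<Rightarrow> 'a set \<Rightarrow> 'a set set" where
  "dcosets K H = range (dcoset K H)"

definition dcoset_top :: "'a::{group_add,topological_space} set \<Rightarrow> 'a set \<Rightarrow> 'a set topology" where
  "dcoset_top K H = topology (\<lambda>U. U \<subseteq> dcosets K H \<and> open (dcoset K H -` U))"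

lemma istopology_dcoset_top:
  "istopology (\<lambda>U. U \<subseteq> dcosets K H \<and> open (dcoset K H -` (U::'a::{group_add,topological_space} set set)))"
  unfolding istopology_def
  by (auto simp: vimage_Union vimage_Int intro!: open_Union)

lemma openin_dcoset_top:
  "openin (dcoset_top K H) U \<longleftrightarrow> U \<subseteq> dcosets K H \<and> open (dcoset K H -` U)"
  unfolding dcoset_top_def using istopology_dcoset_top topology_inverse' by metis

definition nact :: "'a::group_add set \<Rightarrow> 'a set \<Rightarrow> 'a \<Rightarrow> 'a set \<Rightarrow> 'a set" where
  "nact K H n p = dcoset K H (n + (SOME x. x \<in> p))"

definition borel_top :: "'b topology \<Rightarrow> 'b measure" where
  "borel_top X = sigma (topspace X) {U. openin X U}"

definition radon_top :: "'b topology \<Rightarrow> 'b measure \<Rightarrow> bool" where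
  "radon_top X M \<longleftrightarrow> space M = topspace X \<and> sets M = sets (borel_top X) \<and>
     (\<forall>C. compactin X C \<longrightarrow> emeasure M C < \<infinity>) \<and>
     (\<forall>A\<in>sets M. emeasure M A = (INF U\<in>{U. openin X U \<and> A \<subseteq> U}. emeasure M U)) \<and>
     (\<forall>U. openin X U \<longrightarrow> emeasure M U = (SUP C\<in>{C. compactin X C \<and> C \<subseteq> U}. emeasure M C))"

definition strongly_quasi_invariant ::
  "'a::{group_add,topological_space} set \<Rightarrow> 'a set \<Rightarrow> 'a set measure \<Rightarrow> bool" where
  "strongly_quasi_invariant K H \<mu> \<longleftrightarrow>
     (\<exists>lam :: 'a \<times> 'a set \<Rightarrow> real.
        continuous_map (prod_topology (subtopology euclidean (normalizer K)) (dcoset_top K H)) euclideanreal lam \<and>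
        (\<forall>n\<in>normalizer K. \<forall>p\<in>dcosets K H. lam (n, p) > 0) \<and>
        (\<forall>n\<in>normalizer K. \<forall>E\<in>sets \<mu>.
            emeasure \<mu> (nact K H n ` E) = (\<integral>\<^sup>+ p\<in>E. ennreal (lam (n, p)) \<partial>\<mu>)))"

definition rho_function ::
  "'a::{group_add,topological_space} set \<Rightarrow> 'a set \<Rightarrow> 'a measure \<Rightarrow> ('a \<Rightarrow> real) \<Rightarrow> ('a \<Rightarrow> real) \<Rightarrow> ('a \<Rightarrow> real)
     \<Rightarrow> ('a \<Rightarrow> real) \<Rightarrow> bool" where
  "rho_function K H dx \<Delta>G \<Delta>K \<Delta>H \<rho> \<longleftrightarrow>
     (\<forall>x. \<rho> x \<ge> 0) \<and> \<rho> \<in> borel_measurable dx \<and>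
     (\<forall>C. compact C \<longrightarrow> set_integrable dx C \<rho>) \<and>
     (\<forall>k\<in>K. \<forall>h\<in>H. \<forall>x. \<rho> (k + x + h) = \<Delta>K k * \<Delta>H h / \<Delta>G h * \<rho> x)"

definition compactly_supported :: "('a::topological_space \<Rightarrow> complex) \<Rightarrow> bool" where
  "compactly_supported f \<longleftrightarrow> continuous_on UNIV f \<and> compact (closure {x. f x \<noteq> 0})"

definition arises_from_rho ::
  "'a::{group_add,topological_space} set \<Rightarrow> 'a set \<Rightarrow> 'a measure \<Rightarrow> 'a measure \<Rightarrow> 'a measure
     \<Rightarrow> ('a \<Rightarrow> real) \<Rightarrow> ('a \<Rightarrow> real) \<Rightarrow> ('a \<Rightarrow> real) \<Rightarrow> 'a set measure \<Rightarrow> bool" where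
  "arises_from_rho K H dx dk dh \<Delta>G \<Delta>K \<Delta>H \<mu> \<longleftrightarrow>
     (\<exists>\<rho>. rho_function K H dx \<Delta>G \<Delta>K \<Delta>H \<rho> \<and> (\<forall>x. \<rho> x > 0) \<and>
        (\<forall>f. compactly_supported f \<longrightarrow>
           (\<integral>p. (\<integral>k. (\<integral>h. f (- k + (SOME x. x \<in> p) + h) \<partial>dh) \<partial>dk) \<partial>\<mu>)
             = (\<integral>x. f x * complex_of_real (\<rho> x) \<partial>dx)))"

definition measure_support :: "'b topology \<Rightarrow> 'b measure \<Rightarrow> 'b set" where
  "measure_support X M = {p \<in> topspace X. \<forall>U. openin X U \<and> p \<in> U \<longrightarrow> emeasure M U > 0}"

end

theory Submission
  imports Defs
begin

lemma hausdorff_euclidean_t2: "Hausdorff_space (euclidean :: 'a::t2_space topology)"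
  unfolding Hausdorff_space_def disjnt_def by (simp; meson hausdorff)

lemma translate_open:
  fixes W :: "'a::{group_add,topological_space} set"
  assumes add: "continuous_on UNIV (\<lambda>p::'a \<times> 'a. fst p + snd p)" and "open W"
  shows "open ((\<lambda>y. s + y) ` W)"
proof -
  have c: "continuous_on UNIV (\<lambda>y::'a. -s + y)"
  proof -
    have "continuous_on UNIV (\<lambda>y::'a. (-s, y))" by (intro continuous_intros)
    then have "continuous_on UNIV ((\<lambda>p::'a \<times> 'a. fst p + snd p) \<circ> (\<lambda>y::'a. (-s, y)))"
      by (rule continuous_on_compose) (rule continuous_on_subset[OF add], simp)
    then show ?thesis by (simp add: o_def)
  qed
  have eq: "(\<lambda>y. s + y) ` W = (\<lambda>y. -s + y) -` W"
    by (auto simp: image_iff) (metis add_minus_cancel)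
  show ?thesis unfolding eq using open_vimage[OF \<open>open W\<close> c] .
qed

lemma haar_open_pos:
  fixes dx :: "'a::{group_add,t2_space} measure"
  assumes add: "continuous_on UNIV (\<lambda>p::'a \<times> 'a. fst p + snd p)"
    and haar: "haar_on UNIV dx" and W: "open W" "w \<in> W"
  shows "emeasure dx W > 0"
proof (rule ccontr)
  assume "\<not> emeasure dx W > 0"
  then have W0: "emeasure dx W = 0" by (simp add: not_gr_zero)
  have R: "radon_on UNIV dx" and pos: "emeasure dx UNIV > 0"
    and inv: "\<And>s A. A \<in> sets borel \<Longrightarrow> emeasure dx ((\<lambda>y. s + y) ` A) = emeasure dx A"
    using haar unfolding haar_on_def by auto
  have sets: "sets dx = sets borel"
    and reg: "\<And>U. open U \<Longrightarrow> emeasure dx U = (SUP C\<in>{C. compact C \<and> C \<subseteq> U \<inter> UNIV}. emeasure dx C)"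
    using R unfolding radon_on_def by auto
  have "emeasure dx C = 0" if C: "compact C" for C
  proof -
    have cov: "C \<subseteq> (\<Union>c\<in>C. (\<lambda>y. (c + -w) + y) ` W)"
    proof
      fix c assume "c \<in> C"
      moreover have "c = (c + -w) + w" by (simp add: add.assoc)
      ultimately show "c \<in> (\<Union>c\<in>C. (\<lambda>y. (c + -w) + y) ` W)" using W(2) by blast
    qed
    obtain C' where C': "C' \<subseteq> C" "finite C'" "C \<subseteq> (\<Union>c\<in>C'. (\<lambda>y. (c + -w) + y) ` W)"
    proof (rule compactE_image[OF C _ cov])
      show "open ((\<lambda>y. (c + -w) + y) ` W)" for c using translate_open[OF add W(1)] .
    qed blast
    have "(\<Union>c\<in>C'. (\<lambda>y. (c + -w) + y) ` W) \<in> null_sets dx"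
    proof (rule null_sets_UN')
      show "countable C'" using C'(2) by (simp add: countable_finite)
      fix c assume "c \<in> C'"
      have "(\<lambda>y. (c + -w) + y) ` W \<in> sets dx"
        using sets translate_open[OF add W(1)] by simp
      moreover have "emeasure dx ((\<lambda>y. (c + -w) + y) ` W) = 0"
        using inv[of W] W W0 by simp
      ultimately show "(\<lambda>y. (c + -w) + y) ` W \<in> null_sets dx" by (simp add: null_sets_def)
    qed
    moreover have "C \<in> sets dx" using sets borel_closed[OF compact_imp_closed[OF C]] by simp
    ultimately have "C \<in> null_sets dx" using C'(3) by (rule null_sets_subset)
    then show ?thesis by (rule null_setsD1)
  qed
  then have "(SUP C\<in>{C. compact C \<and> C \<subseteq> UNIV \<inter> UNIV}. emeasure dx C) \<le> 0"
    by (intro SUP_least) simp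
  then have "emeasure dx UNIV = 0" using reg[of UNIV] by simp
  then show False using pos by simp
qed


lemma dcoset_shift:
  assumes K: "closed_subgroup K" and H: "closed_subgroup H" and k1: "k1 \<in> K" and h1: "h1 \<in> H"
  shows "dcoset K H (k1 + y + h1) = dcoset K H y"
proof
  show "dcoset K H (k1 + y + h1) \<subseteq> dcoset K H y"
  proof
    fix x assume "x \<in> dcoset K H (k1 + y + h1)"
    then obtain k h where kh: "k \<in> K" "h \<in> H" "x = k + (k1 + y + h1) + h"
      unfolding dcoset_def by blast
    have "x = (k + k1) + y + (h1 + h)" using kh(3) by (simp add: add.assoc)
    moreover have "k + k1 \<in> K" "h1 + h \<in> H" using K H kh k1 h1 unfolding closed_subgroup_def by auto
    ultimately show "x \<in> dcoset K H y" unfolding dcoset_def by blast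
  qed
next
  show "dcoset K H y \<subseteq> dcoset K H (k1 + y + h1)"
  proof
    fix x assume "x \<in> dcoset K H y"
    then obtain k h where kh: "k \<in> K" "h \<in> H" "x = k + y + h"
      unfolding dcoset_def by blast
    have "x = (k + - k1) + (k1 + y + h1) + (- h1 + h)" using kh(3)
      by (simp only: add.assoc minus_add_cancel add_minus_cancel)
    moreover have "k + - k1 \<in> K" "- h1 + h \<in> H" using K H kh k1 h1 unfolding closed_subgroup_def by blast+
    ultimately show "x \<in> dcoset K H (k1 + y + h1)" unfolding dcoset_def by blast
  qed
qed

lemma dcoset_self:
  assumes K: "closed_subgroup K" and H: "closed_subgroup H"
  shows "y \<in> dcoset K H y"
proof -
  have "y = 0 + y + 0" by simp
  moreover have "(0::'a) \<in> K" "(0::'a) \<in> H" using K H unfolding closed_subgroup_def by auto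
  ultimately show ?thesis unfolding dcoset_def by blast
qed

lemma topspace_dcoset_top: "topspace (dcoset_top K H) = dcosets K H"
proof
  show "topspace (dcoset_top K H) \<subseteq> dcosets K H"
    using openin_topspace[of "dcoset_top K H"] unfolding openin_dcoset_top by blast
  have "openin (dcoset_top K H) (dcosets K H)"
  proof -
    have "dcoset K H -` range (dcoset K H) = UNIV" by blast
    then show ?thesis unfolding openin_dcoset_top dcosets_def by simp
  qed
  then show "dcosets K H \<subseteq> topspace (dcoset_top K H)" by (rule openin_subset)
qed

theorem proposition4p6:
  fixes K H :: "'a::{group_add, t2_space} set"
    and dx dk dh :: "'a measure"
    and \<Delta>G \<Delta>K \<Delta>H :: "'a \<Rightarrow> real"
    and \<mu> :: "'a set measure"
  assumes "continuous_on UNIV (\<lambda>p::'a \<times> 'a. fst p + snd p)"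
    and "continuous_on UNIV (uminus :: 'a \<Rightarrow> 'a)"
    and "locally_compact_space (euclidean :: 'a topology)"
    and "closed_subgroup H" and "closed_subgroup K"
    and "haar_on UNIV dx" and "haar_on K dk" and "haar_on H dh"
    and "modular_fn UNIV dx \<Delta>G" and "modular_fn K dk \<Delta>K" and "modular_fn H dh \<Delta>H"
    and "radon_top (dcoset_top K H) \<mu>"
    and "strongly_quasi_invariant K H \<mu>"
    and "arises_from_rho K H dx dk dh \<Delta>G \<Delta>K \<Delta>H \<mu>"
  shows "measure_support (dcoset_top K H) \<mu> = dcosets K H"
proof -
  let ?X = "dcoset_top K H"
  obtain \<rho> where rho: "rho_function K H dx \<Delta>G \<Delta>K \<Delta>H \<rho>" and rpos: "\<And>x. \<rho> x > 0"
    and eq: "\<And>f. compactly_supported f \<Longrightarrow>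
           (\<integral>p. (\<integral>k. (\<integral>h. f (- k + (SOME x. x \<in> p) + h) \<partial>dh) \<partial>dk) \<partial>\<mu>)
             = (\<integral>x. f x * complex_of_real (\<rho> x) \<partial>dx)"
    using assms(14) unfolding arises_from_rho_def by blast
  have rmeas: "\<rho> \<in> borel_measurable dx" and rint: "\<And>C. compact C \<Longrightarrow> set_integrable dx C \<rho>"
    using rho unfolding rho_function_def by auto
  have top: "topspace ?X = dcosets K H" by (rule topspace_dcoset_top)
  have space_mu: "space \<mu> = topspace ?X" and sets_mu: "sets \<mu> = sets (borel_top ?X)"
    using assms(12) unfolding radon_top_def by auto
  have setsdx: "sets dx = sets borel"
    using assms(6) unfolding haar_on_def radon_on_def by auto
  have spacedx: "space dx = UNIV" using sets_eq_imp_space_eq[OF setsdx] by simp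
  have dkK: "AE k in dk. k \<in> K"
  proof -
    have "sets dk = sets borel" "emeasure dk (- K) = 0"
      using assms(7) unfolding haar_on_def radon_on_def by auto
    moreover have "closed K" using assms(5) unfolding closed_subgroup_def by auto
    ultimately have "- K \<in> null_sets dk" by (simp add: null_sets_def borel_open open_Compl)
    from AE_not_in[OF this] show ?thesis by simp
  qed
  have dhH: "AE h in dh. h \<in> H"
  proof -
    have "sets dh = sets borel" "emeasure dh (- H) = 0"
      using assms(8) unfolding haar_on_def radon_on_def by auto
    moreover have "closed H" using assms(4) unfolding closed_subgroup_def by auto
    ultimately have "- H \<in> null_sets dh" by (simp add: null_sets_def borel_open open_Compl)
    from AE_not_in[OF this] show ?thesis by simp
  qed
  have reg: "regular_space (euclidean :: 'a topology)"
    using locally_compact_Hausdorff_imp_regular_space[OF assms(3) hausdorff_euclidean_t2] .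
  have nb: "neighbourhood_base_of (\<lambda>C. compactin euclidean C \<and> closedin euclidean C) (euclidean :: 'a topology)"
    using locally_compact_regular_space_neighbourhood_base assms(3) reg by blast
  have crs: "completely_regular_space (euclidean :: 'a topology)"
    using locally_compact_regular_imp_completely_regular_space assms(3) reg by blast
  have "p \<in> measure_support ?X \<mu>" if p: "p \<in> dcosets K H" for p
    unfolding measure_support_def top
  proof (intro CollectI conjI allI impI p)
    fix U assume "openin ?X U \<and> p \<in> U"
    then have U: "openin ?X U" and pU: "p \<in> U" by auto
    show "emeasure \<mu> U > 0"
    proof (rule ccontr)
      assume "\<not> emeasure \<mu> U > 0"
      then have U0: "emeasure \<mu> U = 0" by (simp add: not_gr_zero)
      obtain y where py: "p = dcoset K H y" using p unfolding dcosets_def by blast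
      define Ov where "Ov = dcoset K H -` U"
      have Oopen: "open Ov" and Usub: "U \<subseteq> dcosets K H" using U unfolding openin_dcoset_top Ov_def by auto
      have yO: "y \<in> Ov" using pU py Ov_def by simp
      obtain W C where W: "open W" "y \<in> W" "W \<subseteq> C" and C: "compact C" "closed C" "C \<subseteq> Ov"
      proof -
        from nb Oopen yO obtain W C where "openin euclidean W" "compactin euclidean C \<and> closedin euclidean C"
          "y \<in> W" "W \<subseteq> C" "C \<subseteq> Ov"
          unfolding neighbourhood_base_of by (meson open_openin)
        then show ?thesis using that by simp
      qed
      obtain \<phi> :: "'a \<Rightarrow> real" where phi: "continuous_map euclidean (top_of_set {0..1}) \<phi>"
        "\<phi> y = 0" "\<phi> ` (- W) \<subseteq> {1}"
      proof -
        have "closedin euclidean (- W)" using W(1) by (simp add: closed_Compl)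
        moreover have "y \<in> topspace euclidean - (- W)" using W(2) by simp
        ultimately show ?thesis using crs that unfolding completely_regular_space_def by blast
      qed
      have phic: "continuous_on UNIV \<phi>" and phi01: "\<And>x. \<phi> x \<in> {0..1}"
        using phi(1) unfolding continuous_map_in_subtopology by auto
      define g where "g = (\<lambda>x. 1 - \<phi> x)"
      have gc: "continuous_on UNIV g" unfolding g_def by (intro continuous_intros phic)
      have g01: "0 \<le> g x" "g x \<le> 1" for x using phi01[of x] unfolding g_def by auto
      have gy: "g y = 1" using phi(2) unfolding g_def by simp
      have gW: "x \<in> W" if "g x \<noteq> 0" for x
        using that phi(3) unfolding g_def by force
      define f where "f = (\<lambda>x. complex_of_real (g x))"
      have fcs: "compactly_supported f"
        unfolding compactly_supported_def
      proof
        show "continuous_on UNIV f" unfolding f_def by (intro continuous_intros gc)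
        have "{x. f x \<noteq> 0} \<subseteq> C" using gW W(3) unfolding f_def by auto
        then have "closure {x. f x \<noteq> 0} \<subseteq> C" using C(2) by (rule closure_minimal)
        then have "closure {x. f x \<noteq> 0} = closure {x. f x \<noteq> 0} \<inter> C" by blast
        then show "compact (closure {x. f x \<noteq> 0})" using closed_Int_compact[OF closed_closure C(1)] by metis
      qed
      have Unull: "U \<in> null_sets \<mu>"
      proof -
        have "{U. openin ?X U} \<subseteq> Pow (topspace ?X)" using openin_subset by blast
        then have "sets (borel_top ?X) = sigma_sets (topspace ?X) {U. openin ?X U}"
          unfolding borel_top_def by (rule sets_measure_of)
        then have "U \<in> sets \<mu>" using sets_mu U by auto
        then show ?thesis using U0 by (simp add: null_sets_def)
      qed
      have LHS: "(\<integral>p. (\<integral>k. (\<integral>h. f (- k + (SOME x. x \<in> p) + h) \<partial>dh) \<partial>dk) \<partial>\<mu>) = 0"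
      proof (rule integral_eq_zero_AE)
        show "AE p in \<mu>. (\<integral>k. (\<integral>h. f (- k + (SOME x. x \<in> p) + h) \<partial>dh) \<partial>dk) = 0"
          using AE_not_in[OF Unull] AE_space
        proof eventually_elim
          case (elim q)
          then have qU: "q \<notin> U" and qd: "q \<in> dcosets K H" using space_mu top by auto
          obtain y' where qy: "q = dcoset K H y'" using qd unfolding dcosets_def by blast
          have "y' \<in> q" using qy dcoset_self[OF assms(5,4)] by simp
          then have "(SOME x. x \<in> q) \<in> q" by (rule someI)
          then obtain k' h' where kh': "k' \<in> K" "h' \<in> H" "(SOME x. x \<in> q) = k' + y' + h'"
            unfolding qy dcoset_def by blast
          show ?case
          proof (rule integral_eq_zero_AE)
            show "AE k in dk. (\<integral>h. f (- k + (SOME x. x \<in> q) + h) \<partial>dh) = 0"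
              using dkK
            proof eventually_elim
              case (elim k)
              show ?case
              proof (rule integral_eq_zero_AE)
                show "AE h in dh. f (- k + (SOME x. x \<in> q) + h) = 0"
                  using dhH
                proof eventually_elim
                  case (elim h)
                  have e: "- k + (SOME x. x \<in> q) + h = (- k + k') + y' + (h' + h)"
                    unfolding kh'(3) by (simp only: add.assoc)
                  have "- k + k' \<in> K" "h' + h \<in> H"
                    using assms(4,5) \<open>k \<in> K\<close> \<open>h \<in> H\<close> kh' unfolding closed_subgroup_def by blast+
                  then have "dcoset K H ((- k + k') + y' + (h' + h)) = dcoset K H y'"
                    by (intro dcoset_shift[OF assms(5,4)])
                  then have "dcoset K H (- k + (SOME x. x \<in> q) + h) = q"
                    by (simp only: e qy[symmetric])
                  then have "- k + (SOME x. x \<in> q) + h \<notin> Ov" using qU unfolding Ov_def by simp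
                  then have "- k + (SOME x. x \<in> q) + h \<notin> W" using W(3) C(3) by blast
                  then show ?case using gW unfolding f_def by force
                qed
              qed
            qed
          qed
        qed
      qed
      have gmeas: "g \<in> borel_measurable dx"
      proof -
        have "measurable dx (borel :: real measure) = measurable borel borel"
          by (rule measurable_cong_sets[OF setsdx]) simp
        then show ?thesis using borel_measurable_continuous_onI[OF gc] by simp
      qed
      have intg: "integrable dx (\<lambda>x. g x * \<rho> x)"
      proof (rule Bochner_Integration.integrable_bound)
        show "integrable dx (\<lambda>x. indicator C x *\<^sub>R \<rho> x)"
          using rint[OF C(1)] unfolding set_integrable_def .
        show "(\<lambda>x. g x * \<rho> x) \<in> borel_measurable dx"
          using gmeas rmeas by (rule borel_measurable_times)
        show "AE x in dx. norm (g x * \<rho> x) \<le> norm (indicator C x *\<^sub>R \<rho> x)"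
        proof (rule AE_I2)
          fix x
          show "norm (g x * \<rho> x) \<le> norm (indicator C x *\<^sub>R \<rho> x)"
          proof (cases "x \<in> C")
            case True
            then show ?thesis using g01[of x] rpos[of x]
              by (simp add: abs_mult mult_left_le_one_le)
          next
            case False
            then have "g x = 0" using gW W(3) by blast
            then show ?thesis by simp
          qed
        qed
      qed
      have pos: "(\<integral>x. g x * \<rho> x \<partial>dx) \<noteq> 0"
      proof
        assume "(\<integral>x. g x * \<rho> x \<partial>dx) = 0"
        moreover have "AE x in dx. 0 \<le> g x * \<rho> x"
        proof (rule AE_I2)
          fix x show "0 \<le> g x * \<rho> x" using g01(1)[of x] rpos[of x] by simp
        qed
        ultimately have ae: "AE x in dx. g x * \<rho> x = 0"
          using integral_nonneg_eq_0_iff_AE[OF intg] by blast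
        define Z where "Z = g -` {0<..}"
        have Zo: "open Z" unfolding Z_def using open_vimage[OF open_greaterThan gc] .
        have yZ: "y \<in> Z" unfolding Z_def using gy by simp
        have Zs: "Z \<in> sets dx" using setsdx Zo by (simp add: borel_open)
        have Zeq: "{x \<in> space dx. \<not> g x * \<rho> x = 0} = Z"
        proof (rule set_eqI)
          fix x
          have "g x * \<rho> x \<noteq> 0 \<longleftrightarrow> g x > 0" using g01(1)[of x] rpos[of x] by auto
          then show "x \<in> {x \<in> space dx. \<not> g x * \<rho> x = 0} \<longleftrightarrow> x \<in> Z"
            unfolding Z_def spacedx by simp
        qed
        have "emeasure dx Z = 0" using AE_iff_measurable[OF Zs Zeq] ae by simp
        moreover have "emeasure dx Z > 0" using haar_open_pos[OF assms(1,6) Zo yZ] .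
        ultimately show False by simp
      qed
      have "(\<integral>x. f x * complex_of_real (\<rho> x) \<partial>dx) = complex_of_real (\<integral>x. g x * \<rho> x \<partial>dx)"
        unfolding f_def by (simp flip: of_real_mult)
      then have "(\<integral>x. f x * complex_of_real (\<rho> x) \<partial>dx) \<noteq> 0" using pos by simp
      then show False using eq[OF fcs] LHS by simp
    qed
  qed
  then have "dcosets K H \<subseteq> measure_support ?X \<mu>" by blast
  moreover have "measure_support ?X \<mu> \<subseteq> dcosets K H"
    unfolding measure_support_def top by blast
  ultimately show ?thesis by blast
qed

end
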